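(* $\mathrm{GSym}=\mathrm{LWCQSym}$.
   Context: $\mathbb P$ and $\mathbb N$ denote positive and nonnegative integers. Let $X=\{x_i:i\in\mathbb P\}$ be commuting indeterminates. A left weak composition is a finite sequence $\alpha=(\alpha_1,\dots,\alpha_k)$ of nonnegative integers that is empty or has $\alpha_k>0$. For such $\alpha$, the left weak monomial quasisymmetric function is $M_\alpha=\sum_{0<i_1<\cdots<i_k}x_{i_1}^{\alpha_1}\cdots x_{i_k}^{\alpha_k}$, with $M_\emptyset=1$. $\mathrm{LWCQSym}$ is the $\mathbb Q$-span of all these $M_\alpha$ in $\mathbb Q[[X]]$. For a left weak composition $\alpha$ of length $k$ and $\beta\in\mathbb N^k$, $$\widehat M_{\binom{\alpha}{\beta}}=\sum_{0<i_1<\cdots<i_k}i_1^{\beta_1}\cdots i_k^{\beta_k}x_{i_1}^{\alpha_1}\cdots x_{i_k}^{\alpha_k}.$$ $\mathrm{GSym}$ is the $\mathbb Q$-span of all such $\widehat M_{\binom{\alpha}{\beta}}$. *)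

theory Defs
  imports Complex_Main
begin

text \<open>Formal power series in the commuting indeterminates x_1, x_2, ... over Q are
represented by their coefficient functions: a monomial is an exponent function
nat => nat (exponent of x_i at i; only finitely supported ones with support in the
positive integers arise), and a series is a map from monomials to rationals.\<close>

type_synonym monomial = "nat \<Rightarrow> nat"
type_synonym series = "monomial \<Rightarrow> rat"

definition left_weak_comp :: "nat list \<Rightarrow> bool" where
  "left_weak_comp \<alpha> \<longleftrightarrow> \<alpha> = [] \<or> last \<alpha> > 0"

definition mono_of :: "nat list \<Rightarrow> nat list \<Rightarrow> monomial" where
  "mono_of is \<alpha> = (\<lambda>n. \<Sum>j<length is. if is ! j = n then \<alpha> ! j else 0)"

definition index_tuples :: "nat \<Rightarrow> nat list set" where
  "index_tuples k = {is. length is = k \<and> sorted_wrt (<) is \<and> (\<forall>i\<in>set is. 0 < i)}"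

text \<open>Coefficients of hat M_(alpha over beta): the sum over tuples of
i_1^{b_1} ... i_k^{b_k} x_{i_1}^{a_1} ... x_{i_k}^{a_k}.\<close>
definition Mhat :: "nat list \<Rightarrow> nat list \<Rightarrow> series" where
  "Mhat \<alpha> \<beta> = (\<lambda>m. \<Sum>is\<in>{is\<in>index_tuples (length \<alpha>). mono_of is \<alpha> = m}.
                      \<Prod>j<length \<alpha>. (of_nat (is ! j) :: rat) ^ (\<beta> ! j))"

definition M :: "nat list \<Rightarrow> series" where
  "M \<alpha> = (\<lambda>m. of_nat (card {is\<in>index_tuples (length \<alpha>). mono_of is \<alpha> = m}))"

definition qspan :: "series set \<Rightarrow> series set" where
  "qspan B = {f. \<exists>S c. finite S \<and> S \<subseteq> B \<and> f = (\<lambda>m. \<Sum>b\<in>S. c b * b m)}"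

definition LWCQSym :: "series set" where
  "LWCQSym = qspan {M \<alpha> | \<alpha>. left_weak_comp \<alpha>}"

definition GSym :: "series set" where
  "GSym = qspan {Mhat \<alpha> \<beta> | \<alpha> \<beta>. left_weak_comp \<alpha> \<and> length \<beta> = length \<alpha>}"

end

theory Submission imports Defs begin

definition ins :: "nat \<Rightarrow> 'a \<Rightarrow> 'a list \<Rightarrow> 'a list" where
  "ins p x xs = take p xs @ x # drop p xs"
definition del :: "nat \<Rightarrow> 'a list \<Rightarrow> 'a list" where
  "del p xs = take p xs @ drop (Suc p) xs"

lemma length_ins[simp]: "p \<le> length xs \<Longrightarrow> length (ins p x xs) = Suc (length xs)"
  by (simp add: ins_def)
lemma length_del[simp]: "p < length xs \<Longrightarrow> length (del p xs) = length xs - 1"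
  by (simp add: del_def)
lemma nth_ins: "p \<le> length xs \<Longrightarrow> i \<le> length xs \<Longrightarrow>
  ins p x xs ! i = (if i < p then xs ! i else if i = p then x else xs ! (i - 1))"
  apply (auto simp: ins_def nth_append min_def nth_Cons split: nat.split)
  apply (rule arg_cong[where f="(!) xs"])
  apply arith
  done
lemma nth_del: "p < length xs \<Longrightarrow> i < length xs - 1 \<Longrightarrow>
  del p xs ! i = (if i < p then xs ! i else xs ! (Suc i))"
  by (auto simp: del_def nth_append min_def)
lemma ins_del: "p < length xs \<Longrightarrow> ins p (xs ! p) (del p xs) = xs"
  by (simp add: ins_def del_def id_take_nth_drop[symmetric])
lemma del_ins: "p \<le> length xs \<Longrightarrow> del p (ins p x xs) = xs"
  by (simp add: ins_def del_def)

lemma mono_of_zip: "length is = length \<alpha> \<Longrightarrow>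
  mono_of is \<alpha> n = sum_list (map (\<lambda>(i,a). if i = n then a else 0) (zip is \<alpha>))"
  by (simp add: mono_of_def sum_list_sum_nth atLeast0LessThan)

definition wt :: "nat list \<Rightarrow> nat list \<Rightarrow> rat" where
  "wt \<beta> is = (\<Prod>j<length \<beta>. (of_nat (is ! j) :: rat) ^ (\<beta> ! j))"

lemma wt_zip: "length is = length \<beta> \<Longrightarrow>
  wt \<beta> is = prod_list (map (\<lambda>(i,b). (of_nat i :: rat) ^ b) (zip is \<beta>))"
  by (simp add: wt_def prod.list_conv_set_nth atLeast0LessThan)

lemma zip_ins: "length xs = length ys \<Longrightarrow> p \<le> length xs \<Longrightarrow>
   zip (ins p x xs) (ins p y ys) = ins p (x,y) (zip xs ys)"
  by (simp add: ins_def zip_append take_zip drop_zip)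

lemma sum_list_ins: "sum_list (map f (ins p x xs)) = sum_list (map f xs) + (f x :: 'b::comm_monoid_add)"
proof -
  have "sum_list (map f xs) = sum_list (map f (take p xs)) + sum_list (map f (drop p xs))"
    by (metis append_take_drop_id map_append sum_list_append)
  then show ?thesis by (simp add: ins_def algebra_simps)
qed
lemma prod_list_ins: "prod_list (map f (ins p x xs)) = prod_list (map f xs) * (f x :: 'b::comm_monoid_mult)"
proof -
  have "prod_list (map f xs) = prod_list (map f (take p xs)) * prod_list (map f (drop p xs))"
    by (metis append_take_drop_id map_append prod_list.append)
  then show ?thesis by (simp add: ins_def algebra_simps)
qed

lemma mono_of_ins: "length is = length \<alpha> \<Longrightarrow> p \<le> length is \<Longrightarrow>
  mono_of (ins p n is) (ins p 0 \<alpha>) = mono_of is \<alpha>"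
proof
  fix x assume a: "length is = length \<alpha>" "p \<le> length is"
  have "mono_of (ins p n is) (ins p 0 \<alpha>) x = sum_list (map (\<lambda>(i,a). if i = x then a else 0) (ins p (n,0) (zip is \<alpha>)))"
    using a by (simp add: mono_of_zip zip_ins)
  also have "\<dots> = sum_list (map (\<lambda>(i,a). if i = x then a else 0) (zip is \<alpha>))"
    by (simp only: sum_list_ins) simp
  finally show "mono_of (ins p n is) (ins p 0 \<alpha>) x = mono_of is \<alpha> x" using a by (simp add: mono_of_zip)
qed

lemma wt_ins: "length is = length \<beta> \<Longrightarrow> p \<le> length is \<Longrightarrow>
  wt (ins p 0 \<beta>) (ins p n is) = wt \<beta> is"
proof -
  assume a: "length is = length \<beta>" "p \<le> length is"
  have "wt (ins p 0 \<beta>) (ins p n is) = prod_list (map (\<lambda>(i,b). (of_nat i :: rat) ^ b) (ins p (n,0) (zip is \<beta>)))"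
    using a by (simp add: wt_zip zip_ins)
  also have "\<dots> = prod_list (map (\<lambda>(i,b). (of_nat i :: rat) ^ b) (zip is \<beta>))"
    by (simp only: prod_list_ins) simp
  finally show ?thesis using a by (simp add: wt_zip)
qed

lemma it_nth: "is \<in> index_tuples k \<longleftrightarrow> length is = k \<and> (\<forall>i j. i < j \<longrightarrow> j < k \<longrightarrow> is ! i < is ! j) \<and> (\<forall>i<k. 0 < is ! i)"
  by (auto simp: index_tuples_def sorted_wrt_iff_nth_less in_set_conv_nth)

lemma mono_of_nth: assumes "sorted_wrt (<) is" "length is = length \<alpha>" "j < length is"
  shows "mono_of is \<alpha> (is ! j) = \<alpha> ! j"
proof -
  have d: "distinct is" using assms(1) by (simp add: strict_sorted_iff)
  have "mono_of is \<alpha> (is ! j) = (\<Sum>l<length is. if l = j then \<alpha> ! l else 0)"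
    unfolding mono_of_def using assms d by (intro sum.cong) (auto simp: nth_eq_iff_index_eq)
  also have "\<dots> = \<alpha> ! j" using assms(3) by simp
  finally show ?thesis .
qed

lemma mono_of_notin: "n \<notin> set is \<Longrightarrow> mono_of is \<alpha> n = 0"
  unfolding mono_of_def by (auto intro!: sum.neutral)

definition T :: "nat list \<Rightarrow> monomial \<Rightarrow> nat list set" where
  "T \<alpha> m = {is\<in>index_tuples (length \<alpha>). mono_of is \<alpha> = m}"

lemma last_max: "sorted_wrt (<) (is::nat list) \<Longrightarrow> x \<in> set is \<Longrightarrow> x \<le> last is"
proof (induction "is")
  case (Cons a xs)
  then show ?case by (cases "xs = []") (auto intro: less_imp_le)
qed simp

lemma T_last: assumes "is \<in> T \<alpha> m" "\<alpha> \<noteq> []" "last \<alpha> > 0"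
  shows "m (last is) > 0" "\<And>n. n > last is \<Longrightarrow> m n = 0"
proof -
  have s: "sorted_wrt (<) is" "length is = length \<alpha>" and m: "m = mono_of is \<alpha>"
    using assms(1) by (auto simp: T_def index_tuples_def)
  have ne: "is \<noteq> []" using s assms(2) by auto
  have "m (last is) = \<alpha> ! (length is - 1)"
    using mono_of_nth[OF s, of "length is - 1"] ne m by (simp add: last_conv_nth)
  then show "m (last is) > 0" using assms(2,3) s(2) by (simp add: last_conv_nth)
  show "\<And>n. n > last is \<Longrightarrow> m n = 0"
    using m mono_of_notin last_max[OF s(1)] by (metis not_le)
qed

lemma finite_T: assumes "left_weak_comp \<alpha>" shows "finite (T \<alpha> m)"
proof (cases "\<alpha> = []")
  case True
  then have "T \<alpha> m \<subseteq> {[]}" by (auto simp: T_def index_tuples_def)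
  then show ?thesis by (rule finite_subset) simp
next
  case False
  then have l: "last \<alpha> > 0" using assms by (simp add: left_weak_comp_def)
  show ?thesis
  proof (cases "T \<alpha> m = {}")
    case True then show ?thesis by simp
  next
    case False
    then obtain is0 where is0: "is0 \<in> T \<alpha> m" by auto
    have "T \<alpha> m \<subseteq> {xs. set xs \<subseteq> {..last is0} \<and> length xs \<le> length \<alpha>}"
    proof
      fix xs assume xs: "xs \<in> T \<alpha> m"
      have "m (last xs) > 0" using T_last[OF xs \<open>\<alpha> \<noteq> []\<close> l] by simp
      then have "last xs \<le> last is0" using T_last(2)[OF is0 \<open>\<alpha> \<noteq> []\<close> l] by (metis not_le less_irrefl)
      moreover have "sorted_wrt (<) xs" "length xs = length \<alpha>" using xs by (auto simp: T_def index_tuples_def)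
      ultimately show "xs \<in> {xs. set xs \<subseteq> {..last is0} \<and> length xs \<le> length \<alpha>}"
        using last_max by fastforce
    qed
    then show ?thesis by (rule finite_subset) (rule finite_lists_length_le, simp)
  qed
qed

definition prev :: "nat list \<Rightarrow> nat \<Rightarrow> nat" where
  "prev is p = (if p = 0 then 0 else is ! (p - 1))"
definition gap :: "nat \<Rightarrow> nat list \<Rightarrow> nat set" where
  "gap p is = {prev is p<..<is ! p}"

lemma ins_it: assumes "is \<in> index_tuples k" "p < k" "n \<in> gap p is"
  shows "ins p n is \<in> index_tuples (Suc k)"
proof -
  have A: "length is = k" "\<And>i j. i < j \<Longrightarrow> j < k \<Longrightarrow> is ! i < is ! j" "\<And>i. i<k \<Longrightarrow> 0 < is ! i"
    using assms(1) unfolding it_nth by auto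
  have n: "prev is p < n" "n < is ! p" using assms(3) by (auto simp: gap_def)
  have lt: "is ! i < n" if "i < p" for i
  proof -
    have "i = p - 1 \<or> i < p - 1" using that by arith
    then have "is ! i \<le> is ! (p - 1)" using A(2)[of i "p - 1"] that assms(2) by (auto intro: less_imp_le)
    then show ?thesis using n that by (simp add: prev_def)
  qed
  have gt: "n < is ! i" if "p \<le> i" "i < k" for i
    using A(2)[of p i] that n by (cases "i = p") auto
  show ?thesis unfolding it_nth
  proof (intro conjI allI impI)
    show "length (ins p n is) = Suc k" using A assms by simp
  next
    fix i j assume ij: "i < j" "j < Suc k"
    show "ins p n is ! i < ins p n is ! j"
      using ij assms(2) A lt gt by (auto simp: nth_ins)
  next
    fix i assume "i < Suc k"
    then show "0 < ins p n is ! i"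
      using assms(2) A n by (auto simp: nth_ins prev_def)
  qed
qed

lemma del_it: assumes "is \<in> index_tuples (Suc k)" "p < k"
  shows "del p is \<in> index_tuples k" "is ! p \<in> gap p (del p is)"
proof -
  have A: "length is = Suc k" "\<And>i j. i < j \<Longrightarrow> j < Suc k \<Longrightarrow> is ! i < is ! j" "\<And>i. i<Suc k \<Longrightarrow> 0 < is ! i"
    using assms(1) unfolding it_nth by auto
  show "del p is \<in> index_tuples k" unfolding it_nth
    using A assms(2) by (auto simp: nth_del)
  show "is ! p \<in> gap p (del p is)"
    using A assms(2) by (auto simp: nth_del gap_def prev_def)
qed

lemma bij_gap: assumes "length \<alpha> = k" "p < k"
  shows "bij_betw (\<lambda>(is,n). ins p n is) (Sigma (T \<alpha> m) (\<lambda>is. gap p is)) (T (ins p 0 \<alpha>) m)"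
proof (rule bij_betw_byWitness[where f'="\<lambda>is'. (del p is', is' ! p)"])
  show "\<forall>a\<in>Sigma (T \<alpha> m) (gap p). (\<lambda>is'. (del p is', is' ! p)) ((\<lambda>(is, n). ins p n is) a) = a"
    using assms by (auto simp: T_def it_nth del_ins nth_ins)
  show "\<forall>a'\<in>T (ins p 0 \<alpha>) m. (\<lambda>(is, n). ins p n is) ((\<lambda>is'. (del p is', is' ! p)) a') = a'"
    using assms by (auto simp: T_def it_nth ins_del)
  show "(\<lambda>(is, n). ins p n is) ` Sigma (T \<alpha> m) (gap p) \<subseteq> T (ins p 0 \<alpha>) m"
  proof clarify
    fix "is" n assume a: "is \<in> T \<alpha> m" "n \<in> gap p is"
    then have i: "is \<in> index_tuples k" and mm: "mono_of is \<alpha> = m" using assms by (auto simp: T_def)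
    have l: "length is = length \<alpha>" using i assms by (simp add: it_nth)
    show "ins p n is \<in> T (ins p 0 \<alpha>) m"
      using ins_it[OF i assms(2) a(2)] mono_of_ins[OF l, of p n] mm assms l
      by (simp add: T_def)
  qed
  show "(\<lambda>is'. (del p is', is' ! p)) ` T (ins p 0 \<alpha>) m \<subseteq> Sigma (T \<alpha> m) (gap p)"
  proof
    fix y assume "y \<in> (\<lambda>is'. (del p is', is' ! p)) ` T (ins p 0 \<alpha>) m"
    then obtain is' where a: "is' \<in> T (ins p 0 \<alpha>) m" and y: "y = (del p is', is' ! p)" by auto
    then have i: "is' \<in> index_tuples (Suc k)" and mm: "mono_of is' (ins p 0 \<alpha>) = m" using assms by (auto simp: T_def)
    have l: "length is' = Suc k" using i by (simp add: it_nth)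
    have e: "ins p (is' ! p) (del p is') = is'" using ins_del[of p is'] l assms by simp
    have "mono_of (del p is') \<alpha> = m"
      using mono_of_ins[of "del p is'" \<alpha> p "is' ! p"] e mm l assms by simp
    then show "y \<in> Sigma (T \<alpha> m) (gap p)"
      using del_it[OF i assms(2)] assms y by (simp add: T_def)
  qed
qed

lemma gap_sum: assumes "length \<alpha> = k" "length \<beta> = k" "p < k" "left_weak_comp \<alpha>"
  shows "(\<Sum>is\<in>T \<alpha> m. wt \<beta> is * of_nat (card (gap p is))) = (\<Sum>is'\<in>T (ins p 0 \<alpha>) m. wt (ins p 0 \<beta>) is')"
proof -
  have fin: "finite (T \<alpha> m)" by (rule finite_T[OF assms(4)])
  have "(\<Sum>is\<in>T \<alpha> m. wt \<beta> is * of_nat (card (gap p is))) = (\<Sum>is\<in>T \<alpha> m. \<Sum>n\<in>gap p is. wt \<beta> is)"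
    by (simp add: mult.commute)
  also have "\<dots> = (\<Sum>x\<in>Sigma (T \<alpha> m) (\<lambda>is. gap p is). wt \<beta> (fst x))"
    using fin by (subst sum.Sigma) (auto simp: gap_def split_def)
  also have "\<dots> = (\<Sum>x\<in>Sigma (T \<alpha> m) (\<lambda>is. gap p is). wt (ins p 0 \<beta>) ((\<lambda>(is,n). ins p n is) x))"
  proof (rule sum.cong[OF refl])
    fix x assume "x \<in> Sigma (T \<alpha> m) (\<lambda>is. gap p is)"
    then have "length (fst x) = k" using assms by (auto simp: T_def it_nth)
    then show "wt \<beta> (fst x) = wt (ins p 0 \<beta>) ((\<lambda>(is,n). ins p n is) x)"
      using wt_ins[of "fst x" \<beta> p "snd x"] assms by (simp add: split_def)
  qed
  also have "\<dots> = (\<Sum>is'\<in>T (ins p 0 \<alpha>) m. wt (ins p 0 \<beta>) is')"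
    by (rule sum.reindex_bij_betw[OF bij_gap[OF assms(1,3)]])
  finally show ?thesis .
qed

lemma telescope: assumes "is \<in> index_tuples k" "j < k"
  shows "is ! j = Suc j + (\<Sum>p\<le>j. card (gap p is))"
  using assms(2)
proof (induction j)
  case 0
  then show ?case using assms(1) by (auto simp: it_nth gap_def prev_def)
next
  case (Suc j)
  have "is ! j < is ! Suc j" using assms(1) Suc.prems by (auto simp: it_nth)
  then show ?case using Suc by (auto simp: gap_def prev_def)
qed

lemma wt_split: assumes "j < length \<beta>" "\<beta> ! j > 0"
  shows "wt \<beta> is = wt (\<beta>[j := \<beta> ! j - 1]) is * of_nat (is ! j)"
proof -
  have f: "finite {..<length \<beta>}" by simp
  have j: "j \<in> {..<length \<beta>}" using assms by simp
  have "wt \<beta> is = of_nat (is ! j) ^ (\<beta> ! j) * (\<Prod>l\<in>{..<length \<beta>} - {j}. (of_nat (is ! l) :: rat) ^ (\<beta> ! l))"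
    unfolding wt_def by (rule prod.remove[OF f j])
  also have "\<dots> = of_nat (is ! j) ^ (\<beta> ! j - 1) * of_nat (is ! j) * (\<Prod>l\<in>{..<length \<beta>} - {j}. (of_nat (is ! l) :: rat) ^ (\<beta>[j := \<beta> ! j - 1] ! l))"
    using assms(2) by (auto simp: power_Suc2[symmetric] intro!: prod.cong)
  also have "wt (\<beta>[j := \<beta> ! j - 1]) is = of_nat (is ! j) ^ (\<beta> ! j - 1) * (\<Prod>l\<in>{..<length \<beta>} - {j}. (of_nat (is ! l) :: rat) ^ (\<beta>[j := \<beta> ! j - 1] ! l))"
    unfolding wt_def using prod.remove[OF f j, of "\<lambda>l. (of_nat (is ! l) :: rat) ^ (\<beta>[j := \<beta> ! j - 1] ! l)"] assms by simp
  ultimately show ?thesis by (simp add: algebra_simps)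
qed

lemma Mhat_wt: "length \<beta> = length \<alpha> \<Longrightarrow> Mhat \<alpha> \<beta> m = (\<Sum>is\<in>T \<alpha> m. wt \<beta> is)"
  by (simp add: Mhat_def T_def wt_def)

lemma Mhat_rec: assumes "left_weak_comp \<alpha>" "length \<beta> = length \<alpha>" "j < length \<alpha>" "\<beta> ! j > 0"
  shows "Mhat \<alpha> \<beta> = (\<lambda>m. of_nat (Suc j) * Mhat \<alpha> (\<beta>[j := \<beta> ! j - 1]) m
     + (\<Sum>p\<le>j. Mhat (ins p 0 \<alpha>) (ins p 0 (\<beta>[j := \<beta> ! j - 1])) m))"
proof
  fix m
  define \<beta>' where "\<beta>' = \<beta>[j := \<beta> ! j - 1]"
  define k where "k = length \<alpha>"
  have l': "length \<beta>' = k" using assms by (simp add: \<beta>'_def k_def)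
  have "Mhat \<alpha> \<beta> m = (\<Sum>is\<in>T \<alpha> m. wt \<beta>' is * of_nat (is ! j))"
    using assms by (simp add: Mhat_wt wt_split \<beta>'_def)
  also have "\<dots> = (\<Sum>is\<in>T \<alpha> m. of_nat (Suc j) * wt \<beta>' is + (\<Sum>p\<le>j. wt \<beta>' is * of_nat (card (gap p is))))"
  proof (rule sum.cong[OF refl])
    fix "is" assume "is \<in> T \<alpha> m"
    then have "is \<in> index_tuples k" by (simp add: T_def k_def)
    then have "of_nat (is ! j) = (of_nat (Suc j + (\<Sum>p\<le>j. card (gap p is))) :: rat)"
      using telescope assms(3) k_def by metis
    then show "wt \<beta>' is * of_nat (is ! j) = of_nat (Suc j) * wt \<beta>' is + (\<Sum>p\<le>j. wt \<beta>' is * of_nat (card (gap p is)))"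
      by (simp add: algebra_simps sum_distrib_left)
  qed
  also have "\<dots> = of_nat (Suc j) * (\<Sum>is\<in>T \<alpha> m. wt \<beta>' is) + (\<Sum>p\<le>j. \<Sum>is\<in>T \<alpha> m. wt \<beta>' is * of_nat (card (gap p is)))"
    by (simp add: sum.distrib sum_distrib_left sum.swap[of _ "T \<alpha> m"])
  also have "\<dots> = of_nat (Suc j) * Mhat \<alpha> \<beta>' m + (\<Sum>p\<le>j. Mhat (ins p 0 \<alpha>) (ins p 0 \<beta>') m)"
  proof -
    have "(\<Sum>is\<in>T \<alpha> m. wt \<beta>' is * of_nat (card (gap p is))) = Mhat (ins p 0 \<alpha>) (ins p 0 \<beta>') m"
      if "p \<in> {..j}" for p
    proof -
      have p: "p < k" using that assms(3) k_def by simp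
      show ?thesis using gap_sum[OF k_def[symmetric] l' p assms(1)] Mhat_wt[of "ins p 0 \<beta>'" "ins p 0 \<alpha>"] p l' k_def
        by simp
    qed
    then show ?thesis using Mhat_wt[of \<beta>' \<alpha>] l' k_def by simp
  qed
  finally show "Mhat \<alpha> \<beta> m = of_nat (Suc j) * Mhat \<alpha> (\<beta>[j := \<beta> ! j - 1]) m
     + (\<Sum>p\<le>j. Mhat (ins p 0 \<alpha>) (ins p 0 (\<beta>[j := \<beta> ! j - 1])) m)" by (simp add: \<beta>'_def)
qed

lemma qspan_zero: "(\<lambda>m. 0) \<in> qspan B"
  unfolding qspan_def by (rule CollectI, rule exI[of _ "{}"]) simp

lemma qspan_base: "b \<in> B \<Longrightarrow> b \<in> qspan B"
  unfolding qspan_def by (rule CollectI, rule exI[of _ "{b}"], rule exI[of _ "\<lambda>_. 1"]) simp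

lemma qspan_smult: "f \<in> qspan B \<Longrightarrow> (\<lambda>m. a * f m) \<in> qspan B"
  unfolding qspan_def
proof clarify
  fix S c assume "finite S" "S \<subseteq> B"
  then show "\<exists>S' c'. finite S' \<and> S' \<subseteq> B \<and> (\<lambda>m. a * (\<Sum>b\<in>S. c b * b m)) = (\<lambda>m. \<Sum>b\<in>S'. c' b * b m)"
    by (intro exI[of _ S] exI[of _ "\<lambda>b. a * c b"]) (simp add: sum_distrib_left mult.assoc)
qed

lemma qspan_add: "f \<in> qspan B \<Longrightarrow> g \<in> qspan B \<Longrightarrow> (\<lambda>m. f m + g m) \<in> qspan B"
  unfolding qspan_def
proof clarify
  fix S1 c1 S2 c2 assume a: "finite S1" "S1 \<subseteq> B" "finite S2" "S2 \<subseteq> B"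
  define c :: "series \<Rightarrow> rat" where "c b = (if b \<in> S1 then c1 b else 0) + (if b \<in> S2 then c2 b else 0)" for b
  have "(\<Sum>b\<in>S1 \<union> S2. c b * b m) = (\<Sum>b\<in>S1. c1 b * b m) + (\<Sum>b\<in>S2. c2 b * b m)" for m
  proof -
    have "(\<Sum>b\<in>S1 \<union> S2. c b * b m) = (\<Sum>b\<in>S1 \<union> S2. if b \<in> S1 then c1 b * b m else 0) + (\<Sum>b\<in>S1 \<union> S2. if b \<in> S2 then c2 b * b m else 0)"
      unfolding c_def sum.distrib[symmetric] by (intro sum.cong) (auto simp: distrib_right)
    also have "\<dots> = (\<Sum>b\<in>S1. c1 b * b m) + (\<Sum>b\<in>S2. c2 b * b m)"
      using a sum.inter_restrict[of "S1 \<union> S2" "\<lambda>b. c1 b * b m" S1] sum.inter_restrict[of "S1 \<union> S2" "\<lambda>b. c2 b * b m" S2]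
      by (simp add: Int_absorb1 Int_absorb2 Un_Int_eq)
    finally show ?thesis .
  qed
  then show "\<exists>S c. finite S \<and> S \<subseteq> B \<and> (\<lambda>m. (\<Sum>b\<in>S1. c1 b * b m) + (\<Sum>b\<in>S2. c2 b * b m)) = (\<lambda>m. \<Sum>b\<in>S. c b * b m)"
    using a by (intro exI[of _ "S1 \<union> S2"] exI[of _ c]) auto
qed

lemma qspan_sum: "finite I \<Longrightarrow> (\<And>i. i \<in> I \<Longrightarrow> f i \<in> qspan B) \<Longrightarrow> (\<lambda>m. \<Sum>i\<in>I. f i m) \<in> qspan B"
proof (induction I rule: finite_induct)
  case empty then show ?case by (simp add: qspan_zero)
next
  case (insert x F)
  then show ?case using qspan_add[of "f x" B "\<lambda>m. \<Sum>i\<in>F. f i m"] by simp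
qed

lemma qspan_sub: "B \<subseteq> qspan C \<Longrightarrow> qspan B \<subseteq> qspan C"
proof
  fix f assume B: "B \<subseteq> qspan C" and "f \<in> qspan B"
  then obtain S c where S: "finite S" "S \<subseteq> B" "f = (\<lambda>m. \<Sum>b\<in>S. c b * b m)" by (auto simp: qspan_def)
  show "f \<in> qspan C" unfolding S(3)
    using S B by (intro qspan_sum qspan_smult) auto
qed

lemma Mhat_zero: "length \<beta> = length \<alpha> \<Longrightarrow> \<forall>j<length \<beta>. \<beta> ! j = 0 \<Longrightarrow> Mhat \<alpha> \<beta> = M \<alpha>"
  by (auto simp: Mhat_def M_def)

lemma lwc_ins: "left_weak_comp \<alpha> \<Longrightarrow> p < length \<alpha> \<Longrightarrow> left_weak_comp (ins p 0 \<alpha>)"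
  by (auto simp: left_weak_comp_def ins_def)

lemma Mhat_in: "left_weak_comp \<alpha> \<Longrightarrow> length \<beta> = length \<alpha> \<Longrightarrow> Mhat \<alpha> \<beta> \<in> LWCQSym"
proof (induction "sum_list \<beta>" arbitrary: \<alpha> \<beta> rule: less_induct)
  case less
  show ?case
  proof (cases "\<forall>j<length \<beta>. \<beta> ! j = 0")
    case True
    then show ?thesis using less.prems Mhat_zero unfolding LWCQSym_def by (auto intro: qspan_base)
  next
    case False
    then obtain j where j: "j < length \<beta>" "\<beta> ! j > 0" by auto
    define \<beta>' where "\<beta>' = \<beta>[j := \<beta> ! j - 1]"
    have sl: "sum_list \<beta>' < sum_list \<beta>"
      using j sum_list_update[of j \<beta> "\<beta> ! j - 1"] elem_le_sum_list[of j \<beta>] unfolding \<beta>'_def by simp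
    have l': "length \<beta>' = length \<alpha>" using less.prems by (simp add: \<beta>'_def)
    have r: "Mhat \<alpha> \<beta> = (\<lambda>m. of_nat (Suc j) * Mhat \<alpha> \<beta>' m
     + (\<Sum>p\<le>j. Mhat (ins p 0 \<alpha>) (ins p 0 \<beta>') m))"
      using Mhat_rec[OF less.prems(1,2) _ j(2)] j less.prems unfolding \<beta>'_def by simp
    have h1: "Mhat \<alpha> \<beta>' \<in> LWCQSym" using less.hyps[OF sl less.prems(1) l'] .
    have h2: "Mhat (ins p 0 \<alpha>) (ins p 0 \<beta>') \<in> LWCQSym" if "p \<in> {..j}" for p
    proof -
      have p: "p < length \<alpha>" using that j less.prems by simp
      have "sum_list (ins p 0 \<beta>') = sum_list \<beta>'" using sum_list_ins[of id p 0 \<beta>'] by simp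
      then show ?thesis using less.hyps[of "ins p 0 \<beta>'" "ins p 0 \<alpha>"] sl lwc_ins[OF less.prems(1) p] p l' by simp
    qed
    show ?thesis unfolding r LWCQSym_def
      apply (rule qspan_add)
       apply (rule qspan_smult)
      using h1 apply (simp add: LWCQSym_def)
      apply (rule qspan_sum)
      using h2 by (auto simp: LWCQSym_def)
  qed
qed

theorem proposition5p6:
  shows "GSym = LWCQSym"
proof
  show "GSym \<subseteq> LWCQSym" unfolding GSym_def LWCQSym_def
    apply (rule qspan_sub)
    using Mhat_in unfolding LWCQSym_def by blast
  show "LWCQSym \<subseteq> GSym" unfolding GSym_def LWCQSym_def
  proof (rule qspan_sub, clarify)
    fix \<alpha> :: "nat list" assume a: "left_weak_comp \<alpha>"
    have "M \<alpha> = Mhat \<alpha> (replicate (length \<alpha>) 0)" by (simp add: Mhat_zero)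
    then show "M \<alpha> \<in> qspan {Mhat \<alpha> \<beta> |\<alpha> \<beta>. left_weak_comp \<alpha> \<and> length \<beta> = length \<alpha>}"
      using a by (intro qspan_base CollectI exI[of _ \<alpha>] exI[of _ "replicate (length \<alpha>) 0"]) simp
  qed
qed

end
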